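(* Let $\mathcal C$ be a category with a class of fibrations and a class of cofibrations, let $X$ be a cofibrant object admitting at least one (weak) cylinder object and let $Y$ be a fibrant object admitting at least one (weak) path object. Then the homotopy relation on maps $X\to Y$ is an equivalence relation; more precisely, for any fixed weak cylinder object of $X$ or weak path object of $Y$, the relation "homotopic relative to it" is an equivalence relation (and these relations all coincide).
   Context: A class of cofibrations on $\mathcal C$: a class of maps such that $\mathcal C$ has a cofibrant initial object $0$ ($X$ cofibrant means $0\to X$ is a cofibration), isomorphisms with cofibrant domain are cofibrations, cofibrations compose, and pushouts of a cofibration $A\to B$ along $A\to C$ with $A,C$ cofibrant exist with $C\to C\sqcup_AB$ a cofibration. A class of fibrations is a class of cofibrations in $\mathcal C^{op}$. An acyclic cofibration is a cofibration with the left lifting property against all fibrations between fibrant objects; an acyclic fibration is a fibration with the right lifting property against all cofibrations between cofibrant objects. A weak cylinder object for a cofibrant $X$ is a commutative square with a cofibration $X\sqcup X\hookrightarrow IX$, the codiagonal $X\sqcup X\to X$, a map $IX\to DX$ and an acyclic cofibration $X\to DX$, such that the first inclusion $X\to IX$ is an acyclic cofibration (strong if $DX=X$). A weak path object for a fibrant $Y$ is dually a square with a fibration $PY\to Y\times Y$, the diagonal, a map $TY\to PY$ and an acyclic fibration $TY\to Y$, such that the first projection $PY\to Y$ is an acyclic fibration. Maps $f,g\colon X\to Y$ are homotopic relative to a cylinder object $IX$ if $(f,g)\colon X\sqcup X\to Y$ factors through $X\sqcup X\to IX$, and relative to a path object $PY$ if $(f,g)\colon X\to Y\times Y$ factors through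 $PY\to Y\times Y$. *)

theory Defs
  imports Main
begin

record ('o, 'a) category =
  obj :: "'o set"
  arr :: "'a set"
  src :: "'a \<Rightarrow> 'o"
  tgt :: "'a \<Rightarrow> 'o"
  cmp :: "'a \<Rightarrow> 'a \<Rightarrow> 'a"   (* cmp C g f = g o f *)
  idm :: "'o \<Rightarrow> 'a"

definition hom :: "('o, 'a) category \<Rightarrow> 'o \<Rightarrow> 'o \<Rightarrow> 'a set" where
  "hom C x y = {f \<in> arr C. src C f = x \<and> tgt C f = y}"

definition is_category :: "('o, 'a) category \<Rightarrow> bool" where
  "is_category C \<longleftrightarrow>
     (\<forall>f\<in>arr C. src C f \<in> obj C \<and> tgt C f \<in> obj C) \<and>
     (\<forall>x\<in>obj C. idm C x \<in> hom C x x) \<and>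
     (\<forall>f\<in>arr C. \<forall>g\<in>arr C. tgt C f = src C g \<longrightarrow> cmp C g f \<in> hom C (src C f) (tgt C g)) \<and>
     (\<forall>f\<in>arr C. cmp C (idm C (tgt C f)) f = f \<and> cmp C f (idm C (src C f)) = f) \<and>
     (\<forall>f\<in>arr C. \<forall>g\<in>arr C. \<forall>h\<in>arr C. tgt C f = src C g \<and> tgt C g = src C h \<longrightarrow>
         cmp C h (cmp C g f) = cmp C (cmp C h g) f)"

definition op :: "('o, 'a) category \<Rightarrow> ('o, 'a) category" where
  "op C = C\<lparr>src := tgt C, tgt := src C, cmp := (\<lambda>g f. cmp C f g)\<rparr>"

definition is_initial :: "('o, 'a) category \<Rightarrow> 'o \<Rightarrow> bool" where
  "is_initial C z \<longleftrightarrow> z \<in> obj C \<and> (\<forall>x\<in>obj C. \<exists>!f. f \<in> hom C z x)"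

definition is_iso :: "('o, 'a) category \<Rightarrow> 'a \<Rightarrow> bool" where
  "is_iso C f \<longleftrightarrow> f \<in> arr C \<and>
     (\<exists>g\<in>hom C (tgt C f) (src C f). cmp C g f = idm C (src C f) \<and> cmp C f g = idm C (tgt C f))"

definition is_pushout :: "('o, 'a) category \<Rightarrow> 'a \<Rightarrow> 'a \<Rightarrow> 'a \<Rightarrow> 'a \<Rightarrow> bool" where
  "is_pushout C f g i j \<longleftrightarrow>
     f \<in> arr C \<and> g \<in> arr C \<and> src C f = src C g \<and>
     i \<in> hom C (tgt C g) (tgt C i) \<and> j \<in> hom C (tgt C f) (tgt C i) \<and>
     cmp C i g = cmp C j f \<and>
     (\<forall>Z u v. u \<in> hom C (tgt C g) Z \<and> v \<in> hom C (tgt C f) Z \<and> cmp C u g = cmp C v f \<longrightarrow>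
        (\<exists>!h. h \<in> hom C (tgt C i) Z \<and> cmp C h i = u \<and> cmp C h j = v))"

definition is_coproduct :: "('o, 'a) category \<Rightarrow> 'o \<Rightarrow> 'o \<Rightarrow> 'a \<Rightarrow> 'a \<Rightarrow> bool" where
  "is_coproduct C X S i1 i2 \<longleftrightarrow>
     i1 \<in> hom C X S \<and> i2 \<in> hom C X S \<and>
     (\<forall>Z f g. f \<in> hom C X Z \<and> g \<in> hom C X Z \<longrightarrow>
        (\<exists>!h. h \<in> hom C S Z \<and> cmp C h i1 = f \<and> cmp C h i2 = g))"

definition cofibrant :: "('o, 'a) category \<Rightarrow> 'a set \<Rightarrow> 'o \<Rightarrow> bool" where
  "cofibrant C K x \<longleftrightarrow>
     (\<exists>z f. is_initial C z \<and> idm C z \<in> K \<and> f \<in> hom C z x \<and> f \<in> K)"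

definition cofibration_class :: "('o, 'a) category \<Rightarrow> 'a set \<Rightarrow> bool" where
  "cofibration_class C K \<longleftrightarrow>
     K \<subseteq> arr C \<and>
     (\<exists>z. is_initial C z \<and> idm C z \<in> K) \<and>
     (\<forall>f. is_iso C f \<and> cofibrant C K (src C f) \<longrightarrow> f \<in> K) \<and>
     (\<forall>f g. f \<in> K \<and> g \<in> K \<and> tgt C f = src C g \<longrightarrow> cmp C g f \<in> K) \<and>
     (\<forall>f g. f \<in> K \<and> g \<in> arr C \<and> src C g = src C f \<and>
            cofibrant C K (src C f) \<and> cofibrant C K (tgt C g) \<longrightarrow>
        (\<exists>i j. is_pushout C f g i j \<and> i \<in> K))"

definition fibration_class :: "('o, 'a) category \<Rightarrow> 'a set \<Rightarrow> bool" where
  "fibration_class C K \<longleftrightarrow> cofibration_class (op C) K"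

definition fibrant :: "('o, 'a) category \<Rightarrow> 'a set \<Rightarrow> 'o \<Rightarrow> bool" where
  "fibrant C K y \<longleftrightarrow> cofibrant (op C) K y"

definition llp :: "('o, 'a) category \<Rightarrow> 'a \<Rightarrow> 'a \<Rightarrow> bool" where
  "llp C i p \<longleftrightarrow>
     (\<forall>u v. u \<in> hom C (src C i) (src C p) \<and> v \<in> hom C (tgt C i) (tgt C p) \<and>
            cmp C p u = cmp C v i \<longrightarrow>
        (\<exists>h\<in>hom C (tgt C i) (src C p). cmp C h i = u \<and> cmp C p h = v))"

definition acyclic_cof :: "('o, 'a) category \<Rightarrow> 'a set \<Rightarrow> 'a set \<Rightarrow> 'a \<Rightarrow> bool" where
  "acyclic_cof C cof fib i \<longleftrightarrow>
     i \<in> cof \<and>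
     (\<forall>p\<in>fib. fibrant C fib (src C p) \<and> fibrant C fib (tgt C p) \<longrightarrow> llp C i p)"

definition acyclic_fib :: "('o, 'a) category \<Rightarrow> 'a set \<Rightarrow> 'a set \<Rightarrow> 'a \<Rightarrow> bool" where
  "acyclic_fib C cof fib p \<longleftrightarrow>
     p \<in> fib \<and>
     (\<forall>i\<in>cof. cofibrant C cof (src C i) \<and> cofibrant C cof (tgt C i) \<longrightarrow> llp C i p)"

record 'a cyl_data =
  cin1 :: 'a     (* X \<rightarrow> X \<squnion> X *)
  cin2 :: 'a     (* X \<rightarrow> X \<squnion> X *)
  cincl :: 'a    (* X \<squnion> X \<rightarrow> IX, cofibration *)
  ccodiag :: 'a  (* X \<squnion> X \<rightarrow> X *)
  cq :: 'a       (* IX \<rightarrow> DX *)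
  cd :: 'a       (* X \<rightarrow> DX, acyclic cofibration *)

definition weak_cylinder ::
  "('o, 'a) category \<Rightarrow> 'a set \<Rightarrow> 'a set \<Rightarrow> 'o \<Rightarrow> 'a cyl_data \<Rightarrow> bool" where
  "weak_cylinder C cof fib X c \<longleftrightarrow>
     is_coproduct C X (tgt C (cin1 c)) (cin1 c) (cin2 c) \<and>
     cincl c \<in> cof \<and> src C (cincl c) = tgt C (cin1 c) \<and>
     ccodiag c \<in> hom C (tgt C (cin1 c)) X \<and>
     cmp C (ccodiag c) (cin1 c) = idm C X \<and> cmp C (ccodiag c) (cin2 c) = idm C X \<and>
     acyclic_cof C cof fib (cd c) \<and> src C (cd c) = X \<and>
     cq c \<in> hom C (tgt C (cincl c)) (tgt C (cd c)) \<and>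
     cmp C (cq c) (cincl c) = cmp C (cd c) (ccodiag c) \<and>
     acyclic_cof C cof fib (cmp C (cincl c) (cin1 c))"

text \<open>Unfolded: product Y \<times> Y with projections
  cin1, cin2, a fibration cincl : PY \<rightarrow> Y \<times> Y, the diagonal ccodiag : Y \<rightarrow> Y \<times> Y,
  cq : TY \<rightarrow> PY, an acyclic fibration cd : TY \<rightarrow> Y, cincl o cq = ccodiag o cd, and
  cin1 o cincl an acyclic fibration.\<close>
definition weak_path ::
  "('o, 'a) category \<Rightarrow> 'a set \<Rightarrow> 'a set \<Rightarrow> 'o \<Rightarrow> 'a cyl_data \<Rightarrow> bool" where
  "weak_path C cof fib Y c \<longleftrightarrow> weak_cylinder (op C) fib cof Y c"

definition homotopic_cyl ::
  "('o, 'a) category \<Rightarrow> 'o \<Rightarrow> 'o \<Rightarrow> 'a cyl_data \<Rightarrow> 'a \<Rightarrow> 'a \<Rightarrow> bool" where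
  "homotopic_cyl C X Y c f g \<longleftrightarrow>
     f \<in> hom C X Y \<and> g \<in> hom C X Y \<and>
     (\<exists>k H. k \<in> hom C (tgt C (cin1 c)) Y \<and> cmp C k (cin1 c) = f \<and> cmp C k (cin2 c) = g \<and>
            H \<in> hom C (tgt C (cincl c)) Y \<and> cmp C H (cincl c) = k)"

definition homotopic_path ::
  "('o, 'a) category \<Rightarrow> 'o \<Rightarrow> 'o \<Rightarrow> 'a cyl_data \<Rightarrow> 'a \<Rightarrow> 'a \<Rightarrow> bool" where
  "homotopic_path C X Y c f g \<longleftrightarrow> homotopic_cyl (op C) Y X c f g"

definition homotopic ::
  "('o, 'a) category \<Rightarrow> 'a set \<Rightarrow> 'a set \<Rightarrow> 'o \<Rightarrow> 'o \<Rightarrow> 'a \<Rightarrow> 'a \<Rightarrow> bool" where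
  "homotopic C cof fib X Y f g \<longleftrightarrow>
     (\<exists>c. weak_cylinder C cof fib X c \<and> homotopic_cyl C X Y c f g) \<or>
     (\<exists>p. weak_path C cof fib Y p \<and> homotopic_path C X Y p f g)"

end

theory Submission imports Defs begin
lemma op_simps[simp]: "arr (op C) = arr C" "obj (op C) = obj C" "src (op C) = tgt C"
  "tgt (op C) = src C" "cmp (op C) g f = cmp C f g" "idm (op C) = idm C" "op (op C) = C"
  by (simp_all add: op_def)

lemma hom_op[simp]: "hom (op C) x y = hom C y x"
  by (auto simp: hom_def)

lemma llp_op[simp]: "llp (op C) a b = llp C b a"
  unfolding llp_def hom_op op_simps by (smt (verit))

lemma is_category_op: "is_category C \<Longrightarrow> is_category (op C)"
  unfolding is_category_def by (auto simp: hom_def)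

context fixes C :: "('o,'a) category" assumes cat: "is_category C"
begin
lemma cat_comp:
  assumes "f \<in> arr C" "g \<in> arr C" "tgt C f = src C g"
  shows "cmp C g f \<in> arr C" "src C (cmp C g f) = src C f" "tgt C (cmp C g f) = tgt C g"
  using cat assms unfolding is_category_def hom_def by auto

lemma cat_assoc:
  assumes "f \<in> arr C" "g \<in> arr C" "h \<in> arr C" "tgt C f = src C g" "tgt C g = src C h"
  shows "cmp C (cmp C h g) f = cmp C h (cmp C g f)"
  using cat assms unfolding is_category_def hom_def by auto

lemma cat_id:
  assumes "x \<in> obj C"
  shows "idm C x \<in> arr C" "src C (idm C x) = x" "tgt C (idm C x) = x"
  using cat assms unfolding is_category_def hom_def by auto

lemma cat_idl: "f \<in> arr C \<Longrightarrow> tgt C f = y \<Longrightarrow> cmp C (idm C y) f = f"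
  using cat unfolding is_category_def by auto
lemma cat_idr: "f \<in> arr C \<Longrightarrow> src C f = y \<Longrightarrow> cmp C f (idm C y) = f"
  using cat unfolding is_category_def by auto
lemma cat_obj: "f \<in> arr C \<Longrightarrow> src C f \<in> obj C" "f \<in> arr C \<Longrightarrow> tgt C f \<in> obj C"
  using cat unfolding is_category_def by auto
end

lemmas cat_simps = cat_comp cat_assoc cat_id cat_idl cat_idr cat_obj
lemma cc_sub: "cofibration_class C K \<Longrightarrow> K \<subseteq> arr C"
  unfolding cofibration_class_def by (elim conjE)
lemma cc_iso: assumes "cofibration_class C K" "is_iso C f" "cofibrant C K (src C f)" shows "f \<in> K"
proof -
  have "\<forall>f. is_iso C f \<and> cofibrant C K (src C f) \<longrightarrow> f \<in> K"
    using assms(1) unfolding cofibration_class_def by (elim conjE)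
  then show ?thesis using assms(2,3) by simp
qed
lemma cc_comp: assumes "cofibration_class C K" "f \<in> K" "g \<in> K" "tgt C f = src C g" shows "cmp C g f \<in> K"
proof -
  have "\<forall>f g. f \<in> K \<and> g \<in> K \<and> tgt C f = src C g \<longrightarrow> cmp C g f \<in> K"
    using assms(1) unfolding cofibration_class_def by (elim conjE)
  then show ?thesis using assms(2-4) by simp
qed
lemma cc_po: assumes "cofibration_class C K" "f \<in> K" "g \<in> arr C" "src C g = src C f"
   "cofibrant C K (src C f)" "cofibrant C K (tgt C g)"
 shows "\<exists>i j. is_pushout C f g i j \<and> i \<in> K"
proof -
  have "\<forall>f g. f \<in> K \<and> g \<in> arr C \<and> src C g = src C f \<and>
            cofibrant C K (src C f) \<and> cofibrant C K (tgt C g) \<longrightarrow>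
        (\<exists>i j. is_pushout C f g i j \<and> i \<in> K)"
    using assms(1) unfolding cofibration_class_def by (elim conjE)
  then show ?thesis using assms(2-6) by simp
qed
context
  fixes C :: "('o,'a) category" and cof fib :: "'a set" and X Y :: 'o and c p :: "'a cyl_data"
  assumes cat: "is_category C"
    and cofc: "cofibration_class C cof"
    and fibc: "cofibration_class (op C) fib"
    and cX: "cofibrant C cof X"
    and fY: "cofibrant (op C) fib Y"
    and wc: "weak_cylinder C cof fib X c"
    and wp: "weak_cylinder (op C) fib cof Y p"
begin

lemma cof_arr: "f \<in> cof \<Longrightarrow> f \<in> arr C"
  using cofc unfolding cofibration_class_def by auto
lemma fib_arr: "f \<in> fib \<Longrightarrow> f \<in> arr C"
  using fibc unfolding cofibration_class_def by auto

lemma cyl: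
  "cin1 c \<in> arr C" "src C (cin1 c) = X"
  "cin2 c \<in> arr C" "src C (cin2 c) = X" "tgt C (cin2 c) = tgt C (cin1 c)"
  "cincl c \<in> arr C" "src C (cincl c) = tgt C (cin1 c)"
  "ccodiag c \<in> arr C" "src C (ccodiag c) = tgt C (cin1 c)" "tgt C (ccodiag c) = X"
  "cmp C (ccodiag c) (cin1 c) = idm C X" "cmp C (ccodiag c) (cin2 c) = idm C X"
  "cd c \<in> arr C" "src C (cd c) = X"
  "cq c \<in> arr C" "src C (cq c) = tgt C (cincl c)" "tgt C (cq c) = tgt C (cd c)"
  "cmp C (cq c) (cincl c) = cmp C (cd c) (ccodiag c)"
  using wc cof_arr unfolding weak_cylinder_def is_coproduct_def acyclic_cof_def hom_def
  by auto

lemma cyl_acyc: "acyclic_cof C cof fib (cd c)" "acyclic_cof C cof fib (cmp C (cincl c) (cin1 c))"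
  using wc unfolding weak_cylinder_def by auto

lemma cyl_univ: "f \<in> hom C X Z \<Longrightarrow> g \<in> hom C X Z \<Longrightarrow>
     (\<exists>!h. h \<in> hom C (tgt C (cin1 c)) Z \<and> cmp C h (cin1 c) = f \<and> cmp C h (cin2 c) = g)"
  using wc unfolding weak_cylinder_def is_coproduct_def by auto

lemma pth:
  "cin1 p \<in> arr C" "tgt C (cin1 p) = Y"
  "cin2 p \<in> arr C" "tgt C (cin2 p) = Y" "src C (cin2 p) = src C (cin1 p)"
  "cincl p \<in> arr C" "cincl p \<in> fib" "tgt C (cincl p) = src C (cin1 p)"
  "ccodiag p \<in> arr C" "tgt C (ccodiag p) = src C (cin1 p)" "src C (ccodiag p) = Y"
  "cmp C (cin1 p) (ccodiag p) = idm C Y" "cmp C (cin2 p) (ccodiag p) = idm C Y"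
  "cd p \<in> arr C" "cd p \<in> fib" "tgt C (cd p) = Y"
  "cq p \<in> arr C" "tgt C (cq p) = src C (cincl p)" "src C (cq p) = src C (cd p)"
  "cmp C (cincl p) (cq p) = cmp C (ccodiag p) (cd p)"
  "cmp C (cin1 p) (cincl p) \<in> fib"
  using wp fib_arr unfolding weak_cylinder_def is_coproduct_def acyclic_cof_def hom_def
  by auto

lemma pth_lift: "i \<in> cof \<Longrightarrow> cofibrant C cof (src C i) \<Longrightarrow> cofibrant C cof (tgt C i) \<Longrightarrow> llp C i (cd p)"
  using wp unfolding weak_cylinder_def acyclic_cof_def fibrant_def by auto

lemma pth_univ: "f \<in> hom C Z Y \<Longrightarrow> g \<in> hom C Z Y \<Longrightarrow>
     (\<exists>!h. h \<in> hom C Z (src C (cin1 p)) \<and> cmp C (cin1 p) h = f \<and> cmp C (cin2 p) h = g)"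
  using wp unfolding weak_cylinder_def is_coproduct_def by auto

lemma term_ex: "\<exists>T tY. T \<in> obj C \<and> (\<forall>x\<in>obj C. \<exists>!f. f \<in> hom C x T) \<and> idm C T \<in> fib \<and> tY \<in> hom C Y T \<and> tY \<in> fib"
  using fY unfolding cofibrant_def is_initial_def by auto

lemma init_ex: "\<exists>Z i0. Z \<in> obj C \<and> (\<forall>x\<in>obj C. \<exists>!f. f \<in> hom C Z x) \<and> idm C Z \<in> cof \<and> i0 \<in> hom C Z X \<and> i0 \<in> cof"
  using cX unfolding cofibrant_def is_initial_def by auto

lemma fib_comp: "a \<in> fib \<Longrightarrow> b \<in> fib \<Longrightarrow> tgt C a = src C b \<Longrightarrow> cmp C b a \<in> fib"
  using fibc unfolding cofibration_class_def by auto

lemma P2_fibrant: "cofibrant (op C) fib (src C (cin1 p))"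
proof -
  obtain T tY where T: "T \<in> obj C" "\<forall>x\<in>obj C. \<exists>!f. f \<in> hom C x T" "idm C T \<in> fib"
    and tY: "tY \<in> hom C Y T" "tY \<in> fib" using term_ex by blast
  have Tinit: "is_initial (op C) T" using T unfolding is_initial_def by auto
  have Tf: "cofibrant (op C) fib T"
    unfolding cofibrant_def using Tinit T cat_id[OF cat T(1)] by (auto simp: hom_def)
  have Yf: "cofibrant (op C) fib (src C tY)" using fY tY by (auto simp: hom_def)
  have tYa: "tY \<in> arr C" "src C tY = Y" "tgt C tY = T" using tY by (auto simp: hom_def)
  have "\<exists>i j. is_pushout (op C) tY tY i j \<and> i \<in> fib"
    using fibc tY Tf Yf tYa unfolding cofibration_class_def by auto
  then obtain i j where po: "is_pushout (op C) tY tY i j" and ifib: "i \<in> fib" by blast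
  define P' where "P' = src C i"
  have ij: "i \<in> arr C" "src C i = P'" "tgt C i = Y" "j \<in> arr C" "src C j = P'" "tgt C j = Y"
     "cmp C tY i = cmp C tY j"
    using po tYa unfolding is_pushout_def P'_def by (auto simp: hom_def)
  have pou: "\<And>Z u v. u \<in> hom C Z Y \<Longrightarrow> v \<in> hom C Z Y \<Longrightarrow> cmp C tY u = cmp C tY v \<Longrightarrow>
        \<exists>!h. h \<in> hom C Z P' \<and> cmp C i h = u \<and> cmp C j h = v"
    using po tYa unfolding is_pushout_def P'_def by auto
  define P2 where "P2 = src C (cin1 p)"
  note pa = pth[folded P2_def]
  have P2obj: "P2 \<in> obj C" using cat_obj[OF cat pa(1)] P2_def by simp
  have Pobj: "P' \<in> obj C" using cat_obj[OF cat ij(1)] ij by simp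
  have h1: "cmp C tY (cin1 p) \<in> hom C P2 T" "cmp C tY (cin2 p) \<in> hom C P2 T"
    using cat_comp[OF cat] pa tYa P2_def by (auto simp: hom_def)
  have "cmp C tY (cin1 p) = cmp C tY (cin2 p)"
    using T(2)[rule_format, OF P2obj] h1 by blast
  moreover have pr: "cin1 p \<in> hom C P2 Y" "cin2 p \<in> hom C P2 Y" by (auto simp: hom_def P2_def pth)
  ultimately obtain e where e: "e \<in> hom C P2 P'" "cmp C i e = cin1 p" "cmp C j e = cin2 p"
    using pou[OF pr] by blast
  obtain e' where e': "e' \<in> hom C P' P2" "cmp C (cin1 p) e' = i" "cmp C (cin2 p) e' = j"
    using pth_univ[of i P' j] ij P2_def by (auto simp: hom_def)
  have ea: "e \<in> arr C" "src C e = P2" "tgt C e = P'" "e' \<in> arr C" "src C e' = P'" "tgt C e' = P2"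
    using e e' by (auto simp: hom_def)
  have ee': "cmp C e e' = idm C P'"
  proof -
    have u: "\<exists>!h. h \<in> hom C P' P' \<and> cmp C i h = i \<and> cmp C j h = j"
      using pou[of i P' j] ij by (auto simp: hom_def)
    have "cmp C e e' \<in> hom C P' P' \<and> cmp C i (cmp C e e') = i \<and> cmp C j (cmp C e e') = j"
      using ea ij e e' by (auto simp: hom_def cat_comp[OF cat] cat_assoc[OF cat, symmetric])
    moreover have "idm C P' \<in> hom C P' P' \<and> cmp C i (idm C P') = i \<and> cmp C j (idm C P') = j"
      using Pobj ij by (auto simp: hom_def cat_id[OF cat] cat_idr[OF cat])
    ultimately show ?thesis using u by blast
  qed
  have e'e: "cmp C e' e = idm C P2"
  proof -
    have u: "\<exists>!h. h \<in> hom C P2 P2 \<and> cmp C (cin1 p) h = cin1 p \<and> cmp C (cin2 p) h = cin2 p"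
      using pth_univ[of "cin1 p" P2 "cin2 p"] pa P2_def by (auto simp: hom_def)
    have "cmp C e' e \<in> hom C P2 P2 \<and> cmp C (cin1 p) (cmp C e' e) = cin1 p \<and> cmp C (cin2 p) (cmp C e' e) = cin2 p"
      using ea pa e e' P2_def by (auto simp: hom_def cat_comp[OF cat] cat_assoc[OF cat, symmetric])
    moreover have "idm C P2 \<in> hom C P2 P2 \<and> cmp C (cin1 p) (idm C P2) = cin1 p \<and> cmp C (cin2 p) (idm C P2) = cin2 p"
      using P2obj pa P2_def by (auto simp: hom_def cat_id[OF cat] cat_idr[OF cat])
    ultimately show ?thesis using u by blast
  qed
  have Pf: "cofibrant (op C) fib P'"
    unfolding cofibrant_def using Tinit T fib_comp[OF ifib tY(2)] ij tYa cat_comp[OF cat, of i tY]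
    by (auto simp: hom_def)
  have "is_iso (op C) e" unfolding is_iso_def using ea e' ee' e'e by (auto simp: hom_def)
  then have efib: "e \<in> fib" using fibc Pf ea unfolding cofibration_class_def by auto
  have ff: "cmp C (cmp C tY i) e \<in> fib" using fib_comp[OF efib fib_comp[OF ifib tY(2)]] ea ij tYa cat_comp[OF cat]
    by auto
  have a: "cmp C (cmp C tY i) e \<in> hom C P2 T"
    using ea ij tYa cat_comp[OF cat] by (simp add: hom_def)
  show ?thesis unfolding cofibrant_def P2_def[symmetric] hom_op op_simps
    using Tinit T(3) ff a by blast
qed
lemmas cs = cat_comp[OF cat] cat_assoc[OF cat] cat_id[OF cat] cat_idl[OF cat] cat_idr[OF cat]

lemma ex1_eq: "\<exists>!x. P x \<Longrightarrow> P a \<Longrightarrow> P b \<Longrightarrow> a = b"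
  by auto

lemma term_obtain:
  obtains T tY where "T \<in> obj C" "\<forall>x\<in>obj C. \<exists>!f. f \<in> hom C x T" "idm C T \<in> fib"
    "tY \<in> hom C Y T" "tY \<in> fib" "cofibrant (op C) fib T"
proof -
  obtain T tY where T: "T \<in> obj C" "\<forall>x\<in>obj C. \<exists>!f. f \<in> hom C x T" "idm C T \<in> fib"
    and tY: "tY \<in> hom C Y T" "tY \<in> fib" using term_ex by blast
  have Tinit: "is_initial (op C) T" using T unfolding is_initial_def by auto
  have Tf: "cofibrant (op C) fib T"
    unfolding cofibrant_def using Tinit T cat_id[OF cat T(1)] by (auto simp: hom_def)
  show ?thesis by (rule that[OF T tY Tf])
qed

lemma term_unique: "T \<in> obj C \<Longrightarrow> \<forall>x\<in>obj C. \<exists>!f. f \<in> hom C x T \<Longrightarrow> a \<in> hom C Z T \<Longrightarrow> b \<in> hom C Z T \<Longrightarrow> a = b"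
proof -
  assume a: "T \<in> obj C" "\<forall>x\<in>obj C. \<exists>!f. f \<in> hom C x T" "a \<in> hom C Z T" "b \<in> hom C Z T"
  have Z: "Z \<in> obj C" using a(3) cat_obj[OF cat] by (auto simp: hom_def)
  show "a = b" by (rule ex1_eq[OF a(2)[rule_format, OF Z] a(3,4)])
qed

lemma llp_apply: "llp C i q \<Longrightarrow> u \<in> hom C (src C i) (src C q) \<Longrightarrow> v \<in> hom C (tgt C i) (tgt C q)
  \<Longrightarrow> cmp C q u = cmp C v i \<Longrightarrow> \<exists>h\<in>hom C (tgt C i) (src C q). cmp C h i = u \<and> cmp C q h = v"
  unfolding llp_def by (drule spec[of _ u], drule spec[of _ v]) simp

lemma ext: assumes f: "f \<in> hom C X Y"
  shows "\<exists>E \<in> hom C (tgt C (cincl c)) Y. cmp C E (cincl c) = cmp C f (ccodiag c)"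
proof -
  obtain T tY where T: "T \<in> obj C" "\<forall>x\<in>obj C. \<exists>!f. f \<in> hom C x T" "idm C T \<in> fib"
    "tY \<in> hom C Y T" "tY \<in> fib" "cofibrant (op C) fib T" by (rule term_obtain)
  have L: "llp C (cd c) tY" using cyl_acyc(1) T(4,5,6) fY cyl unfolding acyclic_cof_def fibrant_def hom_def by simp
  obtain v where v: "v \<in> hom C (tgt C (cd c)) T"
    using T(2)[rule_format, OF cat_obj(2)[OF cat cyl(13)]] by auto
  have E: "cmp C tY f = cmp C v (cd c)"
    by (rule term_unique[OF T(1,2)]) (use f v T(4) cyl in \<open>simp_all add: hom_def cs\<close>)
  have H: "f \<in> hom C (src C (cd c)) (src C tY)" "v \<in> hom C (tgt C (cd c)) (tgt C tY)"
    using f v T(4) cyl by (simp_all add: hom_def)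
  have "\<exists>h\<in>hom C (tgt C (cd c)) (src C tY). cmp C h (cd c) = f \<and> cmp C tY h = v"
    by (rule llp_apply[OF L H E])
  then obtain h where h: "h \<in> hom C (tgt C (cd c)) Y" "cmp C h (cd c) = f"
    using T(4) unfolding hom_def by blast
  show ?thesis
    apply (rule bexI[of _ "cmp C h (cq c)"])
    using h cyl by (simp_all add: hom_def cs flip: h(2))
qed

lemma slide1: assumes "cmp C a b = e" "a \<in> arr C" "b \<in> arr C" "tgt C b = src C a" "x \<in> arr C" "tgt C x = src C b"
  shows "cmp C a (cmp C b x) = cmp C e x"
  using cat_assoc[OF cat, of x b a] assms by simp

lemma slide: assumes "cmp C a b = cmp C e d" "a \<in> arr C" "b \<in> arr C" "e \<in> arr C" "d \<in> arr C"
  "tgt C b = src C a" "tgt C d = src C e" "x \<in> arr C" "tgt C x = src C b" "src C d = src C b"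
  shows "cmp C a (cmp C b x) = cmp C e (cmp C d x)"
  using cat_assoc[OF cat, of x b a] cat_assoc[OF cat, of x d e] assms by simp

lemma ext2: assumes f: "f \<in> hom C X Y"
  shows "\<exists>E \<in> hom C (tgt C (cincl c)) Y. cmp C E (cmp C (cincl c) (cin1 c)) = f
     \<and> cmp C E (cmp C (cincl c) (cin2 c)) = f"
proof -
  obtain E where E: "E \<in> hom C (tgt C (cincl c)) Y" "cmp C E (cincl c) = cmp C f (ccodiag c)"
    using ext[OF f] by blast
  have fa: "f \<in> arr C" "src C f = X" "tgt C f = Y" using f by (simp_all add: hom_def)
  have Ea: "E \<in> arr C" "src C E = tgt C (cincl c)" "tgt C E = Y" using E by (simp_all add: hom_def)
  have 1: "cmp C E (cmp C (cincl c) (cin1 c)) = cmp C f (cmp C (ccodiag c) (cin1 c))"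
    by (rule slide[OF E(2)]) (simp_all add: Ea fa cyl)
  have 2: "cmp C E (cmp C (cincl c) (cin2 c)) = cmp C f (cmp C (ccodiag c) (cin2 c))"
    by (rule slide[OF E(2)]) (simp_all add: Ea fa cyl)
  have 3: "cmp C f (cmp C (ccodiag c) (cin1 c)) = f" "cmp C f (cmp C (ccodiag c) (cin2 c)) = f"
    by (simp_all add: cyl cs fa)
  show ?thesis using E(1) 1 2 3 by auto
qed

lemma refl_path: assumes f: "f \<in> hom C X Y"
  shows "\<exists>K \<in> hom C X (src C (cincl p)). cmp C (cin1 p) (cmp C (cincl p) K) = f
     \<and> cmp C (cin2 p) (cmp C (cincl p) K) = f"
proof -
  obtain Z i0 where Z: "Z \<in> obj C" "\<forall>x\<in>obj C. \<exists>!f. f \<in> hom C Z x" "idm C Z \<in> cof"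
    and i0: "i0 \<in> hom C Z X" "i0 \<in> cof" using init_ex by blast
  have fa: "f \<in> arr C" "src C f = X" "tgt C f = Y" using f by (simp_all add: hom_def)
  have i0a: "i0 \<in> arr C" "src C i0 = Z" "tgt C i0 = X" using i0 by (simp_all add: hom_def)
  have Zc: "cofibrant C cof Z" unfolding cofibrant_def is_initial_def
    using Z cat_id[OF cat Z(1)] by (auto simp: hom_def)
  have L: "llp C i0 (cd p)" by (rule pth_lift) (simp_all add: i0a i0 Zc cX)
  obtain u where u: "u \<in> hom C Z (src C (cd p))"
    using Z(2)[rule_format, OF cat_obj(1)[OF cat pth(14)]] by blast
  have ua: "u \<in> arr C" "src C u = Z" "tgt C u = src C (cd p)" using u by (simp_all add: hom_def)
  have Yo: "Y \<in> obj C" using cat_obj(2)[OF cat fa(1)] fa by simp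
  have E: "cmp C (cd p) u = cmp C f i0"
    by (rule ex1_eq[OF Z(2)[rule_format, OF Yo]]) (simp_all add: hom_def cs ua fa i0a pth)
  have H: "u \<in> hom C (src C i0) (src C (cd p))" "f \<in> hom C (tgt C i0) (tgt C (cd p))"
    using u f i0a pth by (simp_all add: hom_def)
  obtain h where h: "h \<in> hom C (tgt C i0) (src C (cd p))" "cmp C h i0 = u" "cmp C (cd p) h = f"
    using llp_apply[OF L H E] by blast
  have ha: "h \<in> arr C" "src C h = X" "tgt C h = src C (cd p)" using h i0a by (simp_all add: hom_def)
  have s: "cmp C (cincl p) (cmp C (cq p) h) = cmp C (ccodiag p) (cmp C (cd p) h)"
    by (rule slide) (simp_all add: pth ha)
  have s1: "cmp C (cin1 p) (cmp C (ccodiag p) f) = f"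
    using slide1[of "cin1 p" "ccodiag p" "idm C Y" f] by (simp add: pth fa cs)
  have s2: "cmp C (cin2 p) (cmp C (ccodiag p) f) = f"
    using slide1[of "cin2 p" "ccodiag p" "idm C Y" f] by (simp add: pth fa cs)
  show ?thesis
    apply (rule bexI[of _ "cmp C (cq p) h"])
    using s s1 s2 h(3) by (simp_all add: hom_def cs pth ha)
qed


lemma core:
  assumes V1: "V1 \<in> hom C (tgt C (cincl c)) Y" and V2: "V2 \<in> hom C (tgt C (cincl c)) Y"
    and K: "K \<in> hom C X (src C (cincl p))"
    and e1: "cmp C (cin1 p) (cmp C (cincl p) K) = cmp C V1 (cmp C (cincl c) (cin1 c))"
    and e2: "cmp C (cin2 p) (cmp C (cincl p) K) = cmp C V2 (cmp C (cincl c) (cin1 c))"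
  shows "\<exists>K' \<in> hom C X (src C (cincl p)).
     cmp C (cin1 p) (cmp C (cincl p) K') = cmp C V1 (cmp C (cincl c) (cin2 c)) \<and>
     cmp C (cin2 p) (cmp C (cincl p) K') = cmp C V2 (cmp C (cincl c) (cin2 c))"
proof -
  have V1a: "V1 \<in> arr C" "src C V1 = tgt C (cincl c)" "tgt C V1 = Y" using V1 by (simp_all add: hom_def)
  have V2a: "V2 \<in> arr C" "src C V2 = tgt C (cincl c)" "tgt C V2 = Y" using V2 by (simp_all add: hom_def)
  have Ka: "K \<in> arr C" "src C K = X" "tgt C K = src C (cincl p)" using K by (simp_all add: hom_def)
  obtain v where v: "v \<in> hom C (tgt C (cincl c)) (src C (cin1 p))" "cmp C (cin1 p) v = V1" "cmp C (cin2 p) v = V2"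
    using pth_univ[OF V1 V2] by blast
  have va: "v \<in> arr C" "src C v = tgt C (cincl c)" "tgt C v = src C (cin1 p)" using v by (simp_all add: hom_def)
  obtain T tY where T: "T \<in> obj C" "\<forall>x\<in>obj C. \<exists>!f. f \<in> hom C x T" "idm C T \<in> fib"
    "tY \<in> hom C Y T" "tY \<in> fib" "cofibrant (op C) fib T" by (rule term_obtain)
  have tYa: "tY \<in> arr C" "src C tY = Y" "tgt C tY = T" using T(4) by (simp_all add: hom_def)
  have Tinit: "is_initial (op C) T" using T unfolding is_initial_def by auto
  have f1: "cmp C tY (cmp C (cin1 p) (cincl p)) \<in> fib"
    by (rule fib_comp) (simp_all add: pth T(5) tYa cs)
  have h1: "cmp C tY (cmp C (cin1 p) (cincl p)) \<in> hom C (src C (cincl p)) T"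
    by (simp add: hom_def cs pth tYa)
  have PYf: "cofibrant (op C) fib (src C (cincl p))"
    unfolding cofibrant_def hom_op op_simps using Tinit T(3) f1 h1 by blast
  have "\<forall>q\<in>fib. fibrant C fib (src C q) \<and> fibrant C fib (tgt C q) \<longrightarrow> llp C (cmp C (cincl c) (cin1 c)) q"
    using cyl_acyc(2) unfolding acyclic_cof_def by blast
  then have L: "llp C (cmp C (cincl c) (cin1 c)) (cincl p)"
    using pth(7) PYf P2_fibrant unfolding fibrant_def by (simp add: pth)
  have j1a: "cmp C (cincl c) (cin1 c) \<in> arr C" "src C (cmp C (cincl c) (cin1 c)) = X"
     "tgt C (cmp C (cincl c) (cin1 c)) = tgt C (cincl c)" by (simp_all add: cs cyl)
  have sq: "cmp C (cincl p) K = cmp C v (cmp C (cincl c) (cin1 c))"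
  proof (rule ex1_eq[OF pth_univ[of "cmp C V1 (cmp C (cincl c) (cin1 c))" X "cmp C V2 (cmp C (cincl c) (cin1 c))"]])
    show "cmp C V1 (cmp C (cincl c) (cin1 c)) \<in> hom C X Y" "cmp C V2 (cmp C (cincl c) (cin1 c)) \<in> hom C X Y"
      by (simp_all add: hom_def cs j1a V1a V2a)
    show "cmp C (cincl p) K \<in> hom C X (src C (cin1 p)) \<and>
      cmp C (cin1 p) (cmp C (cincl p) K) = cmp C V1 (cmp C (cincl c) (cin1 c)) \<and>
      cmp C (cin2 p) (cmp C (cincl p) K) = cmp C V2 (cmp C (cincl c) (cin1 c))"
      using e1 e2 by (simp add: hom_def cs pth Ka)
    have "cmp C (cin1 p) (cmp C v (cmp C (cincl c) (cin1 c))) = cmp C V1 (cmp C (cincl c) (cin1 c))"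
      by (rule slide1[OF v(2)]) (simp_all add: pth va j1a)
    moreover have "cmp C (cin2 p) (cmp C v (cmp C (cincl c) (cin1 c))) = cmp C V2 (cmp C (cincl c) (cin1 c))"
      by (rule slide1[OF v(3)]) (simp_all add: pth va j1a)
    ultimately show "cmp C v (cmp C (cincl c) (cin1 c)) \<in> hom C X (src C (cin1 p)) \<and>
      cmp C (cin1 p) (cmp C v (cmp C (cincl c) (cin1 c))) = cmp C V1 (cmp C (cincl c) (cin1 c)) \<and>
      cmp C (cin2 p) (cmp C v (cmp C (cincl c) (cin1 c))) = cmp C V2 (cmp C (cincl c) (cin1 c))"
      by (simp add: hom_def cs va j1a)
  qed
  have H: "K \<in> hom C (src C (cmp C (cincl c) (cin1 c))) (src C (cincl p))"
    "v \<in> hom C (tgt C (cmp C (cincl c) (cin1 c))) (tgt C (cincl p))"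
    using K v j1a by (simp_all add: pth)
  obtain Lh where Lh: "Lh \<in> hom C (tgt C (cmp C (cincl c) (cin1 c))) (src C (cincl p))"
    "cmp C (cincl p) Lh = v"
    using llp_apply[OF L H sq] by blast
  have La: "Lh \<in> arr C" "src C Lh = tgt C (cincl c)" "tgt C Lh = src C (cincl p)"
    using Lh j1a by (simp_all add: hom_def)
  have j2a: "cmp C (cincl c) (cin2 c) \<in> arr C" "src C (cmp C (cincl c) (cin2 c)) = X"
     "tgt C (cmp C (cincl c) (cin2 c)) = tgt C (cincl c)" by (simp_all add: cs cyl)
  have a1: "cmp C (cincl p) (cmp C Lh (cmp C (cincl c) (cin2 c))) = cmp C v (cmp C (cincl c) (cin2 c))"
    by (rule slide1[OF Lh(2)]) (simp_all add: pth La j2a)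
  have b1: "cmp C (cin1 p) (cmp C v (cmp C (cincl c) (cin2 c))) = cmp C V1 (cmp C (cincl c) (cin2 c))"
    by (rule slide1[OF v(2)]) (simp_all add: pth va j2a)
  have b2: "cmp C (cin2 p) (cmp C v (cmp C (cincl c) (cin2 c))) = cmp C V2 (cmp C (cincl c) (cin2 c))"
    by (rule slide1[OF v(3)]) (simp_all add: pth va j2a)
  show ?thesis
    apply (rule bexI[of _ "cmp C Lh (cmp C (cincl c) (cin2 c))"])
    using a1 b1 b2 by (simp_all add: hom_def cs La j2a)
qed

lemma from_cyl: assumes "homotopic_cyl C X Y c f g"
  shows "\<exists>H \<in> hom C (tgt C (cincl c)) Y. cmp C H (cmp C (cincl c) (cin1 c)) = f
     \<and> cmp C H (cmp C (cincl c) (cin2 c)) = g"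
proof -
  obtain k H where k: "k \<in> hom C (tgt C (cin1 c)) Y" "cmp C k (cin1 c) = f" "cmp C k (cin2 c) = g"
    and H: "H \<in> hom C (tgt C (cincl c)) Y" "cmp C H (cincl c) = k"
    using assms unfolding homotopic_cyl_def by blast
  have Ha: "H \<in> arr C" "src C H = tgt C (cincl c)" "tgt C H = Y" using H by (simp_all add: hom_def)
  have 1: "cmp C H (cmp C (cincl c) (cin1 c)) = cmp C k (cin1 c)"
    by (rule slide1[OF H(2)]) (simp_all add: cyl Ha)
  have 2: "cmp C H (cmp C (cincl c) (cin2 c)) = cmp C k (cin2 c)"
    by (rule slide1[OF H(2)]) (simp_all add: cyl Ha)
  show ?thesis using H(1) 1 2 k by auto
qed

lemma from_path: assumes "homotopic_cyl (op C) Y X p f g"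
  shows "\<exists>K \<in> hom C X (src C (cincl p)). cmp C (cin1 p) (cmp C (cincl p) K) = f
     \<and> cmp C (cin2 p) (cmp C (cincl p) K) = g"
proof -
  obtain k H where k: "k \<in> hom C X (src C (cin1 p))" "cmp C (cin1 p) k = f" "cmp C (cin2 p) k = g"
    and H: "H \<in> hom C X (src C (cincl p))" "cmp C (cincl p) H = k"
    using assms unfolding homotopic_cyl_def by auto
  show ?thesis using H k by blast
qed

lemma to_path: assumes "K \<in> hom C X (src C (cincl p))" "cmp C (cin1 p) (cmp C (cincl p) K) = f"
     "cmp C (cin2 p) (cmp C (cincl p) K) = g"
  shows "homotopic_cyl (op C) Y X p f g"
proof -
  have Ka: "K \<in> arr C" "src C K = X" "tgt C K = src C (cincl p)" using assms(1) by (simp_all add: hom_def)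
  have "cmp C (cincl p) K \<in> hom C X (src C (cin1 p))" by (simp add: hom_def cs Ka pth)
  moreover have "f \<in> hom C X Y" "g \<in> hom C X Y"
    using assms(2,3) by (auto simp: hom_def cs Ka pth)
  ultimately show ?thesis unfolding homotopic_cyl_def using assms by auto
qed

lemma cyl_refl: assumes f: "f \<in> hom C X Y" shows "homotopic_cyl C X Y c f f"
proof -
  obtain E where E: "E \<in> hom C (tgt C (cincl c)) Y" "cmp C E (cincl c) = cmp C f (ccodiag c)"
    using ext[OF f] by blast
  have fa: "f \<in> arr C" "src C f = X" "tgt C f = Y" using f by (simp_all add: hom_def)
  have k: "cmp C f (ccodiag c) \<in> hom C (tgt C (cin1 c)) Y" by (simp add: hom_def cs fa cyl)
  have "cmp C (cmp C f (ccodiag c)) (cin1 c) = f" "cmp C (cmp C f (ccodiag c)) (cin2 c) = f"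
    by (simp_all add: cs fa cyl)
  then show ?thesis unfolding homotopic_cyl_def using f k E by blast
qed

lemma cyl_to_path: assumes "homotopic_cyl C X Y c f g"
  shows "homotopic_cyl (op C) Y X p f g" "homotopic_cyl (op C) Y X p g f"
proof -
  have fg: "f \<in> hom C X Y" "g \<in> hom C X Y" using assms unfolding homotopic_cyl_def by auto
  obtain H where H: "H \<in> hom C (tgt C (cincl c)) Y" "cmp C H (cmp C (cincl c) (cin1 c)) = f"
     "cmp C H (cmp C (cincl c) (cin2 c)) = g" using from_cyl[OF assms] by blast
  obtain E where E: "E \<in> hom C (tgt C (cincl c)) Y" "cmp C E (cmp C (cincl c) (cin1 c)) = f"
     "cmp C E (cmp C (cincl c) (cin2 c)) = f" using ext2[OF fg(1)] by blast
  obtain K where K: "K \<in> hom C X (src C (cincl p))" "cmp C (cin1 p) (cmp C (cincl p) K) = f"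
     "cmp C (cin2 p) (cmp C (cincl p) K) = f" using refl_path[OF fg(1)] by blast
  obtain K1 where K1: "K1 \<in> hom C X (src C (cincl p))"
     "cmp C (cin1 p) (cmp C (cincl p) K1) = f" "cmp C (cin2 p) (cmp C (cincl p) K1) = g"
    using core[OF E(1) H(1) K(1)] K E H by auto
  obtain K2 where K2: "K2 \<in> hom C X (src C (cincl p))"
     "cmp C (cin1 p) (cmp C (cincl p) K2) = g" "cmp C (cin2 p) (cmp C (cincl p) K2) = f"
    using core[OF H(1) E(1) K(1)] K E H by auto
  show "homotopic_cyl (op C) Y X p f g" by (rule to_path[OF K1])
  show "homotopic_cyl (op C) Y X p g f" by (rule to_path[OF K2])
qed

lemma cyl_path_trans: assumes "homotopic_cyl C X Y c g f" "homotopic_cyl (op C) Y X p g h"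
  shows "homotopic_cyl (op C) Y X p f h"
proof -
  have h: "h \<in> hom C X Y" using assms(2) unfolding homotopic_cyl_def by auto
  obtain H where H: "H \<in> hom C (tgt C (cincl c)) Y" "cmp C H (cmp C (cincl c) (cin1 c)) = g"
     "cmp C H (cmp C (cincl c) (cin2 c)) = f" using from_cyl[OF assms(1)] by blast
  obtain E where E: "E \<in> hom C (tgt C (cincl c)) Y" "cmp C E (cmp C (cincl c) (cin1 c)) = h"
     "cmp C E (cmp C (cincl c) (cin2 c)) = h" using ext2[OF h] by blast
  obtain K where K: "K \<in> hom C X (src C (cincl p))" "cmp C (cin1 p) (cmp C (cincl p) K) = g"
     "cmp C (cin2 p) (cmp C (cincl p) K) = h" using from_path[OF assms(2)] by blast
  obtain K1 where K1: "K1 \<in> hom C X (src C (cincl p))"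
     "cmp C (cin1 p) (cmp C (cincl p) K1) = f" "cmp C (cin2 p) (cmp C (cincl p) K1) = h"
    using core[OF H(1) E(1) K(1)] K E H by auto
  show ?thesis by (rule to_path[OF K1])
qed

lemma path_refl: assumes f: "f \<in> hom C X Y" shows "homotopic_cyl (op C) Y X p f f"
proof -
  obtain K where K: "K \<in> hom C X (src C (cincl p))" "cmp C (cin1 p) (cmp C (cincl p) K) = f"
     "cmp C (cin2 p) (cmp C (cincl p) K) = f" using refl_path[OF f] by blast
  show ?thesis by (rule to_path[OF K])
qed

end

lemma equivI': assumes "\<And>f g. R f g \<Longrightarrow> f \<in> A \<and> g \<in> A" "\<And>f. f \<in> A \<Longrightarrow> R f f"
  "\<And>f g. R f g \<Longrightarrow> R g f" "\<And>f g h. R f g \<Longrightarrow> R g h \<Longrightarrow> R f h"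
  shows "equiv A {(f, g). R f g}"
  unfolding equiv_def refl_on_def sym_def trans_def using assms by blast

lemma dual_pack:
  assumes cat: "is_category C"
    and cofc: "cofibration_class C cof"
    and fibc: "cofibration_class (op C) fib"
    and cX: "cofibrant C cof X"
    and fY: "cofibrant (op C) fib Y"
    and wc: "weak_cylinder C cof fib X c"
    and wp: "weak_cylinder (op C) fib cof Y p"
  shows "(\<forall>f g. homotopic_cyl C X Y c f g \<longrightarrow> homotopic_cyl (op C) Y X p f g)
    \<and> (\<forall>f g. homotopic_cyl C X Y c f g \<longrightarrow> homotopic_cyl (op C) Y X p g f)
    \<and> (\<forall>f g. homotopic_cyl (op C) Y X p f g \<longrightarrow> homotopic_cyl C X Y c f g)
    \<and> (\<forall>f g. homotopic_cyl (op C) Y X p f g \<longrightarrow> homotopic_cyl C X Y c g f)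
    \<and> (\<forall>f g h. homotopic_cyl C X Y c g f \<and> homotopic_cyl (op C) Y X p g h \<longrightarrow> homotopic_cyl (op C) Y X p f h)
    \<and> (\<forall>f g h. homotopic_cyl (op C) Y X p g f \<and> homotopic_cyl C X Y c g h \<longrightarrow> homotopic_cyl C X Y c f h)
    \<and> (\<forall>f \<in> hom C X Y. homotopic_cyl C X Y c f f)"
proof -
  note A = cat cofc fibc cX fY wc wp
  have cat': "is_category (op C)" by (rule is_category_op[OF cat])
  have B: "is_category (op C)" "cofibration_class (op C) fib" "cofibration_class (op (op C)) cof"
    "cofibrant (op C) fib Y" "cofibrant (op (op C)) cof X" "weak_cylinder (op C) fib cof Y p"
    "weak_cylinder (op (op C)) cof fib X c"
    using A cat' by simp_all
  note d1 = cyl_to_path[where C="op C" and cof=fib and fib=cof and X=Y and Y=X and c=p and p=c, OF B, simplified]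
  note d2 = cyl_path_trans[where C="op C" and cof=fib and fib=cof and X=Y and Y=X and c=p and p=c, OF B, simplified]
  show ?thesis
    using cyl_to_path[OF A] cyl_path_trans[OF A] cyl_refl[OF A] d1 d2 by blast
qed

theorem theorem2p1p17:
  fixes C :: "('o, 'a) category" and cof fib :: "'a set" and X Y :: 'o
  assumes "is_category C"
    and "cofibration_class C cof"
    and "fibration_class C fib"
    and "cofibrant C cof X"
    and "fibrant C fib Y"
    and "\<exists>c. weak_cylinder C cof fib X c"
    and "\<exists>p. weak_path C cof fib Y p"
  shows "equiv (hom C X Y) {(f, g). homotopic C cof fib X Y f g}
    \<and> (\<forall>c. weak_cylinder C cof fib X c \<longrightarrow>
           equiv (hom C X Y) {(f, g). homotopic_cyl C X Y c f g})
    \<and> (\<forall>p. weak_path C cof fib Y p \<longrightarrow>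
           equiv (hom C X Y) {(f, g). homotopic_path C X Y p f g})
    \<and> (\<forall>c p f g. weak_cylinder C cof fib X c \<and> weak_path C cof fib Y p \<longrightarrow>
           (homotopic_cyl C X Y c f g \<longleftrightarrow> homotopic_path C X Y p f g))"
proof -
  have fibc: "cofibration_class (op C) fib" using assms(3) unfolding fibration_class_def .
  have fY: "cofibrant (op C) fib Y" using assms(5) unfolding fibrant_def .
  obtain c0 where c0: "weak_cylinder C cof fib X c0" using assms(6) by blast
  obtain p0 where p0: "weak_cylinder (op C) fib cof Y p0" using assms(7) unfolding weak_path_def by blast
  note P = dual_pack[OF assms(1,2) fibc assms(4) fY]
  have hp: "\<And>p f g. homotopic_path C X Y p f g = homotopic_cyl (op C) Y X p f g"
    unfolding homotopic_path_def ..
  have mem: "\<And>c f g. homotopic_cyl C X Y c f g \<Longrightarrow> f \<in> hom C X Y \<and> g \<in> hom C X Y"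
    unfolding homotopic_cyl_def by blast
  have memp: "\<And>p f g. homotopic_cyl (op C) Y X p f g \<Longrightarrow> f \<in> hom C X Y \<and> g \<in> hom C X Y"
    unfolding homotopic_cyl_def by simp
  have eqc: "\<forall>c. weak_cylinder C cof fib X c \<longrightarrow> equiv (hom C X Y) {(f, g). homotopic_cyl C X Y c f g}"
  proof (intro allI impI)
    fix c assume c: "weak_cylinder C cof fib X c"
    note Q = P[OF c p0]
    show "equiv (hom C X Y) {(f, g). homotopic_cyl C X Y c f g}"
    proof (rule equivI')
      show "\<And>f g. homotopic_cyl C X Y c f g \<Longrightarrow> f \<in> hom C X Y \<and> g \<in> hom C X Y" by (rule mem)
      show "\<And>f. f \<in> hom C X Y \<Longrightarrow> homotopic_cyl C X Y c f f" using Q by blast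
      show sy: "\<And>f g. homotopic_cyl C X Y c f g \<Longrightarrow> homotopic_cyl C X Y c g f" using Q by blast
      show "\<And>f g h. homotopic_cyl C X Y c f g \<Longrightarrow> homotopic_cyl C X Y c g h \<Longrightarrow> homotopic_cyl C X Y c f h"
      proof -
        fix f g h assume 1: "homotopic_cyl C X Y c f g" and 2: "homotopic_cyl C X Y c g h"
        have "homotopic_cyl C X Y c g f" using sy[OF 1] .
        moreover have "homotopic_cyl (op C) Y X p0 g h" using 2 Q by blast
        ultimately have "homotopic_cyl (op C) Y X p0 f h" using Q by blast
        then show "homotopic_cyl C X Y c f h" using Q by blast
      qed
    qed
  qed
  have eqp: "\<forall>p. weak_path C cof fib Y p \<longrightarrow> equiv (hom C X Y) {(f, g). homotopic_path C X Y p f g}"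
  proof (intro allI impI)
    fix p assume p: "weak_path C cof fib Y p"
    then have p': "weak_cylinder (op C) fib cof Y p" unfolding weak_path_def .
    note Q = P[OF c0 p']
    show "equiv (hom C X Y) {(f, g). homotopic_path C X Y p f g}"
      unfolding hp
    proof (rule equivI')
      show "\<And>f g. homotopic_cyl (op C) Y X p f g \<Longrightarrow> f \<in> hom C X Y \<and> g \<in> hom C X Y" by (rule memp)
      show "\<And>f. f \<in> hom C X Y \<Longrightarrow> homotopic_cyl (op C) Y X p f f" using Q by blast
      show "\<And>f g. homotopic_cyl (op C) Y X p f g \<Longrightarrow> homotopic_cyl (op C) Y X p g f" using Q by blast
      show "\<And>f g h. homotopic_cyl (op C) Y X p f g \<Longrightarrow> homotopic_cyl (op C) Y X p g h \<Longrightarrow> homotopic_cyl (op C) Y X p f h"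
      proof -
        fix f g h assume 1: "homotopic_cyl (op C) Y X p f g" and 2: "homotopic_cyl (op C) Y X p g h"
        have "homotopic_cyl C X Y c0 g f" using 1 Q by blast
        then show "homotopic_cyl (op C) Y X p f h" using 2 Q by blast
      qed
    qed
  qed
  have eqv: "\<forall>c p f g. weak_cylinder C cof fib X c \<and> weak_path C cof fib Y p \<longrightarrow>
           (homotopic_cyl C X Y c f g \<longleftrightarrow> homotopic_path C X Y p f g)"
    unfolding hp weak_path_def using P by blast
  have hom_eq: "{(f, g). homotopic C cof fib X Y f g} = {(f, g). homotopic_cyl C X Y c0 f g}"
  proof -
    have "\<And>f g. homotopic C cof fib X Y f g \<longleftrightarrow> homotopic_cyl C X Y c0 f g"
    proof
      fix f g assume "homotopic C cof fib X Y f g"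
      then consider (a) c where "weak_cylinder C cof fib X c" "homotopic_cyl C X Y c f g"
        | (b) p where "weak_cylinder (op C) fib cof Y p" "homotopic_cyl (op C) Y X p f g"
        unfolding homotopic_def hp weak_path_def by blast
      then show "homotopic_cyl C X Y c0 f g"
      proof cases
        case a
        have "homotopic_cyl (op C) Y X p0 f g" using P[OF a(1) p0] a(2) by blast
        then show ?thesis using P[OF c0 p0] by blast
      next
        case b
        then show ?thesis using P[OF c0 b(1)] by blast
      qed
    next
      fix f g assume "homotopic_cyl C X Y c0 f g"
      then show "homotopic C cof fib X Y f g" unfolding homotopic_def using c0 by blast
    qed
    then show ?thesis by simp
  qed
  show ?thesis using eqc eqp eqv hom_eq c0 by simp
qed

end
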